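(* For $a>0$, $S>0$, $\sigma=e^{-aS}$, the scaling function $\mathcal F(S,a,\lambda)$ (defined in the context) satisfies $$\mathcal F(S,a,0)=\frac{2a^3\sigma^2(1+\sigma^2)}{(1-\sigma^2)^3},\qquad \frac{\partial}{\partial\lambda}\mathcal F(S,a,\lambda)\Big|_{\lambda=0}=-\frac{a\,\sigma^2(385-189\sigma+154\sigma^2+54\sigma^3-11\sigma^4-9\sigma^5)}{70(1-\sigma)(1+\sigma)^4}.$$
   Context: For $a>0$, $\lambda\ge0$, let $A=\sqrt{1+3\lambda/a^2}$, $\sigma=e^{-aS}$, $W(\sigma,A)=4A^3(1-\sigma)^3+12A^2(1-\sigma)^2(1+\sigma)+A(1-\sigma)(11+38\sigma+11\sigma^2)+3(1+\sigma)(1+8\sigma+\sigma^2)$, $U(\sigma,A)=2A^2(1-\sigma)^2+5A(1-\sigma)(1+\sigma)+3(1+3\sigma+\sigma^2)$, $Y(S,a,\lambda)=a\bigl(-3A-36\,\sigma U/((1-\sigma)W)\bigr)$. Let $H(S,a,\lambda)$ be the unique solution on $S\in(0,\infty)$ of $6\partial_S H+4YH+(\partial_S Y)^2=0$ with $H\to0$ as $S\to\infty$, and $\mathcal F(S,a,\lambda)=H(S,a,\lambda)/3$. *)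

theory Defs
  imports "HOL-Analysis.Analysis"
begin

definition Acoef :: "real \<Rightarrow> real \<Rightarrow> real" where
  "Acoef a lam = sqrt (1 + 3 * lam / a^2)"

definition Wfun :: "real \<Rightarrow> real \<Rightarrow> real" where
  "Wfun \<sigma> A = 4 * A^3 * (1 - \<sigma>)^3 + 12 * A^2 * (1 - \<sigma>)^2 * (1 + \<sigma>)
     + A * (1 - \<sigma>) * (11 + 38 * \<sigma> + 11 * \<sigma>^2) + 3 * (1 + \<sigma>) * (1 + 8 * \<sigma> + \<sigma>^2)"

definition Ufun :: "real \<Rightarrow> real \<Rightarrow> real" where
  "Ufun \<sigma> A = 2 * A^2 * (1 - \<sigma>)^2 + 5 * A * (1 - \<sigma>) * (1 + \<sigma>) + 3 * (1 + 3 * \<sigma> + \<sigma>^2)"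

definition Yfun :: "real \<Rightarrow> real \<Rightarrow> real \<Rightarrow> real" where
  "Yfun S a lam = (let A = Acoef a lam; \<sigma> = exp (- a * S) in
     a * (- 3 * A - 36 * \<sigma> * Ufun \<sigma> A / ((1 - \<sigma>) * Wfun \<sigma> A)))"

definition Hsol :: "real \<Rightarrow> real \<Rightarrow> (real \<Rightarrow> real) \<Rightarrow> bool" where
  "Hsol a lam h \<longleftrightarrow>
     (\<forall>S>0. \<exists>d. (h has_real_derivative d) (at S) \<and>
        6 * d + 4 * Yfun S a lam * h S + (deriv (\<lambda>s. Yfun s a lam) S)^2 = 0)
     \<and> (h \<longlongrightarrow> 0) at_top"

definition Hfun :: "real \<Rightarrow> real \<Rightarrow> real \<Rightarrow> real" where
  "Hfun S a lam = (THE y. \<exists>h. Hsol a lam h \<and> h S = y)"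

definition Ffun :: "real \<Rightarrow> real \<Rightarrow> real \<Rightarrow> real" where
  "Ffun S a lam = Hfun S a lam / 3"

end

theory Submission
  imports Defs
begin

definition Wsd :: "real \<Rightarrow> real \<Rightarrow> real" where
  "Wsd s A = (27 + 27*A - 12*A^2 - 12*A^3) + (54 - 54*A - 24*A^2 + 24*A^3) * s
     + (9 - 33*A + 36*A^2 - 12*A^3) * s^2"
definition Wssd :: "real \<Rightarrow> real \<Rightarrow> real" where
  "Wssd s A = (54 - 54*A - 24*A^2 + 24*A^3) + 2*(9 - 33*A + 36*A^2 - 12*A^3) * s"

definition yy :: "real \<Rightarrow> real \<Rightarrow> real" where
  "yy s A = -3*A - 9* s/(1-s) - 3* s*Wsd s A / Wfun s A"
definition ys :: "real \<Rightarrow> real \<Rightarrow> real" where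
  "ys s A = -9/(1-s)^2 - 3*(Wsd s A / Wfun s A)
      - 3* s*(Wssd s A * Wfun s A - (Wsd s A)^2)/(Wfun s A)^2"

lemma W_deriv: "((\<lambda>s. Wfun s A) has_real_derivative Wsd s A) (at s)"
  unfolding Wfun_def Wsd_def
  by (auto intro!: derivative_eq_intros simp: algebra_simps power2_eq_square power3_eq_cube)

lemma Ws_deriv: "((\<lambda>s. Wsd s A) has_real_derivative Wssd s A) (at s)"
  unfolding Wssd_def Wsd_def
  by (auto intro!: derivative_eq_intros simp: algebra_simps power2_eq_square power3_eq_cube)

lemma W_pos: assumes "0 \<le> s" "s \<le> 1" "A \<ge> 1" shows "Wfun s A > 0"
proof -
  have "0 \<le> 1 - s" using assms by simp
  have a: "4 * A^3 * (1 - s)^3 \<ge> 0" using assms by simp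
  have b: "12 * A^2 * (1 - s)^2 * (1 + s) \<ge> 0" using assms by simp
  have c: "A * (1 - s) * (11 + 38 * s + 11 * s^2) \<ge> 0" using assms by simp
  have d: "3 * (1 + s) * (1 + 8 * s + s^2) \<ge> 3"
  proof -
    have "(1+s)*(1 + 8 * s + s^2) \<ge> 1*1" using assms by (intro mult_mono) auto
    then have "3*((1+s)*(1 + 8 * s + s^2)) \<ge> 3" by linarith
    then show ?thesis by (simp only: mult.assoc)
  qed
  show ?thesis unfolding Wfun_def using a b c d by linarith
qed

lemma U_pos: assumes "0 \<le> s" "s \<le> 1" "A \<ge> 1" shows "Ufun s A > 0"
proof -
  have a: "2 * A^2 * (1 - s)^2 \<ge> 0" using assms by simp
  have b: "5 * A * (1 - s) * (1 + s) \<ge> 0" using assms by simp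
  have c: "3 * (1 + 3 * s + s^2) \<ge> 3" using assms by simp
  show ?thesis unfolding Ufun_def using a b c by linarith
qed

lemma U_W: "36 * Ufun s A = 9 * Wfun s A + 3*(1-s)*Wsd s A"
  unfolding Ufun_def Wfun_def Wsd_def
  by (simp add: algebra_simps power2_eq_square power3_eq_cube)

lemma yy_alt: assumes "0 \<le> s" "s < 1" "A \<ge> 1"
  shows "yy s A = -3*A - 36 * s * Ufun s A / ((1-s) * Wfun s A)"
proof -
  have W: "Wfun s A > 0" using W_pos assms by auto
  have "1 - s \<noteq> 0" using assms by simp
  have U: "Ufun s A = (9 * Wfun s A + 3*(1-s)*Wsd s A)/36" using U_W[of s A] by simp
  show ?thesis using W \<open>1 - s \<noteq> 0\<close> unfolding yy_def U
    by (simp add: field_simps)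
qed

lemma yy_deriv: assumes "s \<noteq> 1" "Wfun s A \<noteq> 0"
  shows "((\<lambda>s. yy s A) has_real_derivative ys s A) (at s)"
proof -
  have d1: "((\<lambda>s. s/(1-s)) has_real_derivative 1/(1-s)^2) (at s)"
    using assms by (auto intro!: derivative_eq_intros simp: field_simps power2_eq_square)
  have d2: "((\<lambda>s. s*Wsd s A / Wfun s A) has_real_derivative
     (Wsd s A / Wfun s A + s*(Wssd s A * Wfun s A - (Wsd s A)^2)/(Wfun s A)^2)) (at s)"
    using assms by (auto intro!: derivative_eq_intros W_deriv Ws_deriv simp: field_simps power2_eq_square)
  have "((\<lambda>s. -3*A - 9*(s/(1-s)) - 3*(s*Wsd s A / Wfun s A)) has_real_derivative
     0 - 9*(1/(1-s)^2) - 3*(Wsd s A / Wfun s A + s*(Wssd s A * Wfun s A - (Wsd s A)^2)/(Wfun s A)^2)) (at s)"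
    by (intro DERIV_diff DERIV_cmult d1 d2 DERIV_const)
  then show ?thesis unfolding yy_def ys_def by (simp add: algebra_simps)
qed

definition NN :: "real \<Rightarrow> real \<Rightarrow> real" where
  "NN s A = 12 + 20*A + 8*A^2 + 27* s - 12* s*A^2 + 18* s^2 - 12* s^2*A + 3* s^3 - 8* s^3*A + 4* s^3*A^2"
definition NNs :: "real \<Rightarrow> real \<Rightarrow> real" where
  "NNs s A = 27 - 12*A^2 + 36* s - 24* s*A + 9* s^2 - 24* s^2*A + 12* s^2*A^2"
definition Qd :: "real \<Rightarrow> real \<Rightarrow> real" where
  "Qd s A = -3 + 6* s*NN s A/((1+s)*Wfun s A)"
definition Qs :: "real \<Rightarrow> real \<Rightarrow> real" where
  "Qs s A = 6*((NN s A + s*NNs s A)*((1+s)*Wfun s A) - s*NN s A*(Wfun s A + (1+s)*Wsd s A))/((1+s)*Wfun s A)^2"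

lemma NN_deriv: "((\<lambda>s. NN s A) has_real_derivative NNs s A) (at s)"
  unfolding NN_def NNs_def
  by (auto intro!: derivative_eq_intros simp: algebra_simps power2_eq_square)

lemma W1: "Wfun s 1 = 30*(1+s)" unfolding Wfun_def by (simp add: algebra_simps power2_eq_square power3_eq_cube)
lemma Ws1: "Wsd s 1 = 30" unfolding Wsd_def by simp
lemma Wss1: "Wssd s 1 = 0" unfolding Wssd_def by simp
lemma NN1: "NN s 1 = 40 + 15* s + 6* s^2 - s^3" unfolding NN_def by simp
lemma NNs1: "NNs s 1 = 15 + 12* s - 3* s^2" unfolding NNs_def by simp

lemma Wpoly: "Wsd s A * Wfun s 1 - Wsd s 1 * Wfun s A = (A-1)*(-60*NN s A)"
  unfolding W1 Ws1 unfolding Wsd_def Wfun_def NN_def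
  by (simp add: algebra_simps power2_eq_square power3_eq_cube)

lemma Qd_id: assumes "0 \<le> s" "s < 1" "A \<ge> 1"
  shows "yy s A = yy s 1 + (A-1)*Qd s A"
proof -
  have W: "Wfun s A > 0" using W_pos assms by auto
  have W1p: "Wfun s 1 > 0" using W_pos assms by auto
  have sp: "1 + s \<noteq> 0" using assms by simp
  have "yy s A - yy s 1 = -3*(A-1) - 3* s*(Wsd s A / Wfun s A - Wsd s 1 / Wfun s 1)"
    unfolding yy_def by (simp add: algebra_simps diff_divide_distrib)
  also have "Wsd s A / Wfun s A - Wsd s 1 / Wfun s 1 = (Wsd s A * Wfun s 1 - Wsd s 1 * Wfun s A)/(Wfun s A * Wfun s 1)"
    using W W1p by (simp add: field_simps)
  also have "\<dots> = (A-1)*(-60*NN s A)/(Wfun s A * (30*(1+s)))" using Wpoly[of s A] by (simp add: W1)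
  finally have "yy s A - yy s 1 = -3*(A-1) - 3* s*((A-1)*(-60*NN s A)/(Wfun s A * (30*(1+s))))" .
  also have "\<dots> = (A-1)*Qd s A" unfolding Qd_def using W assms sp
    by (simp add: divide_simps) (simp add: algebra_simps)
  finally show ?thesis by simp
qed

lemma Qd_deriv: assumes "1 + s \<noteq> 0" "Wfun s A \<noteq> 0"
  shows "((\<lambda>s. Qd s A) has_real_derivative Qs s A) (at s)"
proof -
  have n: "DERIV (\<lambda>s. s*NN s A) s :> 1*NN s A + NNs s A * s"
    by (rule DERIV_mult[OF DERIV_ident NN_deriv])
  have d: "DERIV (\<lambda>s. (1+s)*Wfun s A) s :> (0+1)*Wfun s A + Wsd s A*(1+s)"
    by (rule DERIV_mult[OF DERIV_add[OF DERIV_const DERIV_ident] W_deriv])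
  have q: "DERIV (\<lambda>s. s*NN s A/((1+s)*Wfun s A)) s :>
     ((1*NN s A + NNs s A * s) * ((1+s)*Wfun s A) - s*NN s A * ((0+1)*Wfun s A + Wsd s A*(1+s)))
      / (((1+s)*Wfun s A) * ((1+s)*Wfun s A))"
    by (rule DERIV_divide[OF n d]) (use assms in simp)
  have q2: "DERIV (\<lambda>s. -3 + 6*(s*NN s A/((1+s)*Wfun s A))) s :> 0 + 6 *
     (((1*NN s A + NNs s A * s) * ((1+s)*Wfun s A) - s*NN s A * ((0+1)*Wfun s A + Wsd s A*(1+s)))
      / (((1+s)*Wfun s A) * ((1+s)*Wfun s A)))"
    by (intro DERIV_add DERIV_cmult q DERIV_const)
  have e: "(\<lambda>s. Qd s A) = (\<lambda>s. -3 + 6*(s*NN s A/((1+s)*Wfun s A)))"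
    unfolding Qd_def by (simp add: mult.assoc)
  show ?thesis unfolding e using q2 by (simp add: Qs_def power2_eq_square algebra_simps)
qed

lemma yy1: assumes "0 \<le> s" "s < 1" shows "yy s 1 = -3*(1+4* s+s^2)/(1-s^2)"
proof -
  have "s * s \<le> s" using mult_left_le[of s s] assms by simp
  then have "1 - s > 0" "1 + s > 0" "1 - s^2 > 0" using assms by (auto simp: power2_eq_square)
  then show ?thesis unfolding yy_def W1 Ws1 by (simp add: divide_simps) (simp add: algebra_simps power2_eq_square)
qed

lemma ys1: assumes "0 \<le> s" "s < 1" shows "ys s 1 = -12*(1+s+s^2)/(1-s^2)^2"
proof -
  have "s * s \<le> s" using mult_left_le[of s s] assms by simp
  then have "1 - s > 0" "1 + s > 0" "1 - s^2 > 0" using assms by (auto simp: power2_eq_square)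
  then show ?thesis unfolding ys_def W1 Ws1 Wss1 by (simp add: divide_simps) (simp add: algebra_simps power2_eq_square)
qed

lemma Qd1: assumes "0 \<le> s" "s < 1" shows "Qd s 1 = (-15+10* s+6* s^3-s^4)/(5*(1+s)^2)"
proof -
  have "1 + s > 0" using assms by auto
  then show ?thesis unfolding Qd_def W1 NN1 by (simp add: divide_simps) algebra
qed

lemma Qs1: assumes "0 \<le> s" "s < 1" shows "Qs s 1 = (40-10* s+18* s^2+2* s^3-2* s^4)/(5*(1+s)^3)"
proof -
  have "1 + s > 0" using assms by auto
  then show ?thesis unfolding Qs_def W1 Ws1 NN1 NNs1 by (simp add: divide_simps) algebra
qed

definition g0 :: "real \<Rightarrow> real" where "g0 s = 6* s^2*(1+s^2)/(1-s^2)^3"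
definition g0d :: "real \<Rightarrow> real" where "g0d s = 12* s*(1+4* s^2+s^4)/(1-s^2)^4"
definition kap :: "real \<Rightarrow> real" where
  "kap s = -(s^2*(385-189* s+154* s^2+54* s^3-11* s^4-9* s^5))/(35*(1-s)*(1+s)^4)"
definition kapd :: "real \<Rightarrow> real" where
  "kapd s = 2* s*(-385+861* s-1169* s^2+285* s^3+37* s^4+15* s^5-19* s^6-9* s^7)/(35*(1-s)^2*(1+s)^5)"

lemma s_facts: fixes s :: real assumes "0 \<le> s" "s < 1"
  shows "1 - s > 0" "1 + s > 0" "1 - s^2 > 0"
proof -
  have "s * s \<le> s" using mult_left_le[of s s] assms by simp
  then show "1 - s > 0" "1 + s > 0" "1 - s^2 > 0" using assms by (auto simp: power2_eq_square)
qed

lemma g0_deriv: assumes "0 \<le> s" "s < 1" shows "(g0 has_real_derivative g0d s) (at s)"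
proof -
  note sf = s_facts[OF assms]
  have f: "DERIV (\<lambda>s. 6* s^2*(1+s^2)) s :> 12* s + 24* s^3"
    by (auto intro!: derivative_eq_intros simp: algebra_simps power2_eq_square power3_eq_cube)
  have g: "DERIV (\<lambda>s. (1-s^2)^3) s :> -6* s*(1-s^2)^2"
    by (auto intro!: derivative_eq_intros simp: algebra_simps power2_eq_square power3_eq_cube)
  have "DERIV (\<lambda>s. 6* s^2*(1+s^2)/(1-s^2)^3) s :>
     ((12* s + 24* s^3) * (1-s^2)^3 - 6* s^2*(1+s^2) * (-6* s*(1-s^2)^2)) / ((1-s^2)^3 * (1-s^2)^3)"
    by (rule DERIV_divide[OF f g]) (use sf in simp)
  moreover have "((12* s + 24* s^3) * (1-s^2)^3 - 6* s^2*(1+s^2) * (-6* s*(1-s^2)^2)) / ((1-s^2)^3 * (1-s^2)^3) = g0d s"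
    unfolding g0d_def using sf by (simp add: divide_simps) algebra
  ultimately show ?thesis unfolding g0_def by simp
qed

lemma kap_deriv: assumes "0 \<le> s" "s < 1" shows "(kap has_real_derivative kapd s) (at s)"
proof -
  note sf = s_facts[OF assms]
  have f: "DERIV (\<lambda>s. -(s^2*(385-189* s+154* s^2+54* s^3-11* s^4-9* s^5))) s :>
     -(770* s - 567* s^2 + 616* s^3 + 270* s^4 - 66* s^5 - 63* s^6)"
    by (auto intro!: derivative_eq_intros simp: algebra_simps power2_eq_square power3_eq_cube eval_nat_numeral)
  have g: "DERIV (\<lambda>s. 35*(1-s)*(1+s)^4) s :> 35*(1+s)^3*(3 - 5* s)"
    by (auto intro!: derivative_eq_intros simp: algebra_simps power2_eq_square power3_eq_cube eval_nat_numeral)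
  have "DERIV (\<lambda>s. -(s^2*(385-189* s+154* s^2+54* s^3-11* s^4-9* s^5))/(35*(1-s)*(1+s)^4)) s :>
     ((-(770* s - 567* s^2 + 616* s^3 + 270* s^4 - 66* s^5 - 63* s^6)) * (35*(1-s)*(1+s)^4)
      - (-(s^2*(385-189* s+154* s^2+54* s^3-11* s^4-9* s^5))) * (35*(1+s)^3*(3 - 5* s)))
      / ((35*(1-s)*(1+s)^4) * (35*(1-s)*(1+s)^4))"
    by (rule DERIV_divide[OF f g]) (use sf in simp)
  moreover have "((-(770* s - 567* s^2 + 616* s^3 + 270* s^4 - 66* s^5 - 63* s^6)) * (35*(1-s)*(1+s)^4)
      - (-(s^2*(385-189* s+154* s^2+54* s^3-11* s^4-9* s^5))) * (35*(1+s)^3*(3 - 5* s)))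
      / ((35*(1-s)*(1+s)^4) * (35*(1-s)*(1+s)^4)) = kapd s"
    unfolding kapd_def using sf by (simp add: divide_simps) algebra
  ultimately show ?thesis unfolding kap_def by simp
qed

lemma g0_ode: assumes "0 \<le> s" "s < 1"
  shows "-6* s*g0d s + 4*yy s 1 * g0 s + s^2*(ys s 1)^2 = 0"
proof -
  note sf = s_facts[OF assms]
  show ?thesis unfolding g0d_def g0_def yy1[OF assms] ys1[OF assms]
    using sf by (simp add: divide_simps) algebra
qed

lemma kap_ode: assumes "0 \<le> s" "s < 1"
  shows "-6* s*kapd s + 4*yy s 1 * kap s + 4*Qd s 1 * g0 s + 2* s^2*ys s 1 * Qs s 1 = 0"
proof -
  note sf = s_facts[OF assms]
  show ?thesis unfolding kapd_def kap_def g0_def yy1[OF assms] ys1[OF assms] Qd1[OF assms] Qs1[OF assms]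
    using sf by (simp add: divide_simps) algebra
qed

lemma maxp_upper:
  fixes r r' Y f :: "real \<Rightarrow> real"
  assumes c: "c > 0"
    and der: "\<And>t. t \<ge> S \<Longrightarrow> (r has_real_derivative r' t) (at t)"
    and eq: "\<And>t. t \<ge> S \<Longrightarrow> 6 * r' t + 4 * Y t * r t = - f t"
    and Yle: "\<And>t. t \<ge> S \<Longrightarrow> Y t \<le> -c"
    and fb: "\<And>t. t \<ge> S \<Longrightarrow> \<bar>f t\<bar> \<le> M"
    and lim: "(r \<longlongrightarrow> 0) at_top"
  shows "r S \<le> M/(4*c)"
proof (rule ccontr)
  assume "\<not> ?thesis" hence big: "r S > M/(4*c)" by simp
  have M0: "M \<ge> 0" using fb[of S] by auto
  hence "M/(4*c) \<ge> 0" using c by simp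
  hence rS: "r S > 0" using big by linarith
  from order_tendstoD(2)[OF lim rS] have "eventually (\<lambda>t. r t < r S) at_top" .
  then obtain N where N: "\<And>t. t \<ge> N \<Longrightarrow> r t < r S" by (auto simp: eventually_at_top_linorder)
  define T where "T = max N S"
  have T: "T \<ge> S" "r T < r S" using N[of T] by (auto simp: T_def)
  have cont: "continuous_on {S..T} r"
    by (rule continuous_at_imp_continuous_on) (metis atLeastAtMost_iff der DERIV_isCont)
  obtain p where p: "p \<in> {S..T}" "\<And>y. y \<in> {S..T} \<Longrightarrow> r y \<le> r p"
    using continuous_attains_sup[OF compact_Icc _ cont] T by auto
  have rp: "r p \<ge> r S" using p T by auto
  have "p \<noteq> T" using rp T by auto
  hence pT: "p < T" using p by auto
  have pS: "p \<ge> S" using p by auto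
  have e1: "6 * r' p = - f p - 4 * Y p * r p" using eq[OF pS] by linarith
  have e2: "- f p \<ge> -M" using fb[OF pS] by auto
  have rpos: "r p > 0" using rp rS by linarith
  have "(-Y p) * r p \<ge> c * r p" using Yle[OF pS] rpos by (intro mult_right_mono) auto
  hence e3: "- 4 * Y p * r p \<ge> 4*c*r p" by simp
  have "r p > M/(4*c)" using rp big by linarith
  hence e4: "4*c*r p > M" using c by (simp add: pos_divide_less_eq mult.commute)
  have "r' p > 0" using e1 e2 e3 e4 by linarith
  from DERIV_pos_inc_right[OF der[OF pS] this] obtain d where
    d: "d > 0" "\<And>h. h > 0 \<Longrightarrow> h < d \<Longrightarrow> r p < r (p + h)" by blast
  define h where "h = min (d/2) (T - p)"
  have h: "h > 0" "h < d" "p + h \<in> {S..T}" using d pT pS by (auto simp: h_def)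
  have "r p < r (p + h)" using d(2) h by auto
  moreover have "r (p + h) \<le> r p" using p(2) h(3) by auto
  ultimately show False by simp
qed

lemma maxp:
  fixes r r' Y f :: "real \<Rightarrow> real"
  assumes c: "c > 0"
    and der: "\<And>t. t \<ge> S \<Longrightarrow> (r has_real_derivative r' t) (at t)"
    and eq: "\<And>t. t \<ge> S \<Longrightarrow> 6 * r' t + 4 * Y t * r t = - f t"
    and Yle: "\<And>t. t \<ge> S \<Longrightarrow> Y t \<le> -c"
    and fb: "\<And>t. t \<ge> S \<Longrightarrow> \<bar>f t\<bar> \<le> M"
    and lim: "(r \<longlongrightarrow> 0) at_top"
  shows "\<bar>r S\<bar> \<le> M/(4*c)"
proof -
  have u: "r S \<le> M/(4*c)" by (rule maxp_upper[OF c der eq Yle fb lim])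
  have "(\<lambda>t. - r t) S \<le> M/(4*c)"
  proof (rule maxp_upper[where r="\<lambda>t. - r t" and r'="\<lambda>t. - r' t" and f="\<lambda>t. - f t" and Y=Y])
    show "c > 0" by (rule c)
    show "\<And>t. t \<ge> S \<Longrightarrow> Y t \<le> -c" by (rule Yle)
    show "\<And>t. t \<ge> S \<Longrightarrow> ((\<lambda>t. - r t) has_real_derivative - r' t) (at t)"
      using der by (auto intro: DERIV_minus)
    show "6 * (- r' t) + 4 * Y t * (- r t) = - (- f t)" if "t \<ge> S" for t
    proof -
      have "6 * (- r' t) + 4 * Y t * (- r t) = - (6 * r' t + 4 * Y t * r t)" by (simp add: algebra_simps)
      also have "\<dots> = - (- f t)" using eq[OF that] by simp
      finally show ?thesis .
    qed
    show "\<And>t. t \<ge> S \<Longrightarrow> \<bar>- f t\<bar> \<le> M" using fb by simp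
    show "((\<lambda>t. - r t) \<longlongrightarrow> 0) at_top" using tendsto_minus[OF lim] by simp
  qed
  with u show ?thesis by simp
qed

definition sg :: "real \<Rightarrow> real \<Rightarrow> real" where "sg a t = exp (- a * t)"

lemma sg_pos: "sg a t > 0" unfolding sg_def by simp
lemma sg_lt1: assumes "a > 0" "t > 0" shows "sg a t < 1"
  unfolding sg_def using assms by simp
lemma sg_deriv: "(sg a has_real_derivative (- a * sg a t)) (at t)"
  unfolding sg_def by (auto intro!: derivative_eq_intros)
lemma sg_lim: assumes "a > 0" shows "(sg a \<longlongrightarrow> 0) at_top"
proof -
  have "LIM x at_top. (- a) * x :> at_bot"
    by (rule filterlim_tendsto_neg_mult_at_bot[OF tendsto_const _ filterlim_ident]) (use assms in simp)
  from filterlim_compose[OF exp_at_bot this] show ?thesis unfolding sg_def by simp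
qed
lemma sg_mono: assumes "a > 0" "t \<le> u" shows "sg a u \<le> sg a t"
  unfolding sg_def using assms by (simp add: mult_left_mono)

definition Yt :: "real \<Rightarrow> real \<Rightarrow> real \<Rightarrow> real" where "Yt a A t = a * yy (sg a t) A"
definition Ydt :: "real \<Rightarrow> real \<Rightarrow> real \<Rightarrow> real" where
  "Ydt a A t = - (a^2 * sg a t * ys (sg a t) A)"

lemma sgf: assumes "a > 0" "t > 0" shows "0 \<le> sg a t" "sg a t < 1"
  using sg_pos sg_lt1[OF assms] by (auto intro: less_imp_le)

lemma Yt_deriv: assumes "a > 0" "t > 0" "A \<ge> 1"
  shows "(Yt a A has_real_derivative Ydt a A t) (at t)"
proof -
  have W: "Wfun (sg a t) A > 0" using W_pos sgf[OF assms(1,2)] assms(3) by auto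
  have "DERIV (\<lambda>s. yy s A) (sg a t) :> ys (sg a t) A"
    by (rule yy_deriv) (use W sgf[OF assms(1,2)] in auto)
  from DERIV_chain2[OF this sg_deriv]
  have "DERIV (\<lambda>t. yy (sg a t) A) t :> ys (sg a t) A * (- a * sg a t)" .
  from DERIV_cmult[OF this, of a] show ?thesis
    unfolding Yt_def Ydt_def by (simp add: power2_eq_square algebra_simps)
qed

lemma Yt_le: assumes "a > 0" "t > 0" "A \<ge> 1" shows "Yt a A t \<le> -3*a"
proof -
  note s = sgf[OF assms(1,2)]
  have W: "Wfun (sg a t) A > 0" using W_pos s assms(3) by auto
  have U: "Ufun (sg a t) A > 0" using U_pos s assms(3) by auto
  have "36 * sg a t * Ufun (sg a t) A / ((1 - sg a t) * Wfun (sg a t) A) \<ge> 0"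
    using W U s by (intro divide_nonneg_pos mult_nonneg_nonneg) auto
  hence "yy (sg a t) A \<le> -3" unfolding yy_alt[OF s assms(3)] using assms(3) by linarith
  hence "a * yy (sg a t) A \<le> a * (-3)" using assms(1) by (intro mult_left_mono) auto
  thus ?thesis unfolding Yt_def by simp
qed

lemma Acoef_ge: assumes "a > 0" "lam \<ge> 0" shows "Acoef a lam \<ge> 1"
  unfolding Acoef_def using assms by simp

lemma Yfun_Yt: assumes "a > 0" "t > 0" "lam \<ge> 0"
  shows "Yfun t a lam = Yt a (Acoef a lam) t"
  unfolding Yfun_def Yt_def Let_def sg_def[symmetric]
  using yy_alt[OF sgf[OF assms(1,2)] Acoef_ge[OF assms(1,3)]] by simp

lemma deriv_Yfun: assumes "a > 0" "t > 0" "lam \<ge> 0"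
  shows "deriv (\<lambda>s. Yfun s a lam) t = Ydt a (Acoef a lam) t"
proof -
  have "((\<lambda>s. Yfun s a lam) has_real_derivative Ydt a (Acoef a lam) t) (at t)"
    by (rule has_field_derivative_transform_within_open[OF Yt_deriv[OF assms(1,2) Acoef_ge[OF assms(1,3)]], of "{0<..}"])
       (use assms Yfun_Yt in auto)
  thus ?thesis by (rule DERIV_imp_deriv)
qed

definition Hs :: "real \<Rightarrow> real \<Rightarrow> (real \<Rightarrow> real) \<Rightarrow> bool" where
  "Hs a A h \<longleftrightarrow> (\<forall>S>0. \<exists>d. (h has_real_derivative d) (at S) \<and>
        6 * d + 4 * Yt a A S * h S + (Ydt a A S)^2 = 0) \<and> (h \<longlongrightarrow> 0) at_top"

lemma Hsol_Hs: assumes "a > 0" "lam \<ge> 0" shows "Hsol a lam h \<longleftrightarrow> Hs a (Acoef a lam) h"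
  unfolding Hsol_def Hs_def using assms by (simp add: Yfun_Yt deriv_Yfun)

lemma Hs_unique: assumes a: "a > 0" and A: "A \<ge> 1" and h1: "Hs a A h1" and h2: "Hs a A h2" and S: "S > 0"
  shows "h1 S = h2 S"
proof -
  have "\<forall>S. \<exists>d. S > 0 \<longrightarrow> (h1 has_real_derivative d) (at S) \<and> 6 * d + 4 * Yt a A S * h1 S + (Ydt a A S)^2 = 0"
    using h1 unfolding Hs_def by blast
  then obtain d1 where d1: "\<And>S. S > 0 \<Longrightarrow> (h1 has_real_derivative d1 S) (at S) \<and> 6 * d1 S + 4 * Yt a A S * h1 S + (Ydt a A S)^2 = 0"
    by metis
  have "\<forall>S. \<exists>d. S > 0 \<longrightarrow> (h2 has_real_derivative d) (at S) \<and> 6 * d + 4 * Yt a A S * h2 S + (Ydt a A S)^2 = 0"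
    using h2 unfolding Hs_def by blast
  then obtain d2 where d2: "\<And>S. S > 0 \<Longrightarrow> (h2 has_real_derivative d2 S) (at S) \<and> 6 * d2 S + 4 * Yt a A S * h2 S + (Ydt a A S)^2 = 0"
    by metis
  have "\<bar>(\<lambda>t. h1 t - h2 t) S\<bar> \<le> 0/(4*(3*a))"
  proof (rule maxp[where r="\<lambda>t. h1 t - h2 t" and r'="\<lambda>t. d1 t - d2 t" and Y="Yt a A" and f="\<lambda>t. 0" and c="3*a" and M=0])
    show "3*a > 0" using a by simp
    show "((\<lambda>t. h1 t - h2 t) has_real_derivative d1 t - d2 t) (at t)" if "S \<le> t" for t
      using d1[of t] d2[of t] that S by (intro DERIV_diff) auto
    show "6 * (d1 t - d2 t) + 4 * Yt a A t * (h1 t - h2 t) = - 0" if "S \<le> t" for t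
    proof -
      have "6 * (d1 t - d2 t) + 4 * Yt a A t * (h1 t - h2 t) =
          (6 * d1 t + 4 * Yt a A t * h1 t + (Ydt a A t)^2) - (6 * d2 t + 4 * Yt a A t * h2 t + (Ydt a A t)^2)"
        by (simp add: algebra_simps)
      also have "\<dots> = 0" using d1[of t] d2[of t] that S by simp
      finally show ?thesis by simp
    qed
    show "Yt a A t \<le> - (3*a)" if "S \<le> t" for t using Yt_le[OF a _ A, of t] that S by simp
    show "\<bar>0\<bar> \<le> (0::real)" if "S \<le> t" for t by simp
    show "((\<lambda>t. h1 t - h2 t) \<longlongrightarrow> 0) at_top"
      using tendsto_diff[of h1 0 at_top h2 0] h1 h2 unfolding Hs_def by simp
  qed
  thus ?thesis by simp
qed

lemma Hfun_eq: assumes a: "a > 0" and l: "lam \<ge> 0" and S: "S > 0" and h: "Hs a (Acoef a lam) h"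
  shows "Hfun S a lam = h S"
  unfolding Hfun_def
proof (rule the_equality)
  show "\<exists>h'. Hsol a lam h' \<and> h' S = h S" using h Hsol_Hs[OF a l] by blast
  fix y assume "\<exists>h'. Hsol a lam h' \<and> h' S = y"
  then obtain h' where "Hsol a lam h'" "h' S = y" by blast
  then show "y = h S" using Hs_unique[OF a Acoef_ge[OF a l] _ h S] Hsol_Hs[OF a l] by metis
qed

lemma ys_id: assumes "0 < s" "s < 1" "A \<ge> 1" shows "ys s A = ys s 1 + (A-1)*Qs s A"
proof -
  have W: "Wfun s A > 0" "Wfun s 1 > 0" using W_pos assms by auto
  have sp: "1 + s \<noteq> 0" "s \<noteq> 1" using assms by auto
  have d1: "DERIV (\<lambda>x. yy x A) s :> ys s A" by (rule yy_deriv) (use W sp in auto)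
  have d2: "DERIV (\<lambda>x. yy x 1 + (A-1)*Qd x A) s :> ys s 1 + (A-1)*Qs s A"
  proof -
    have e1: "DERIV (\<lambda>x. yy x 1) s :> ys s 1" by (rule yy_deriv) (use W sp in auto)
    have e2: "DERIV (\<lambda>x. Qd x A) s :> Qs s A" by (rule Qd_deriv) (use W sp in auto)
    show ?thesis by (rule DERIV_add[OF e1 DERIV_cmult[OF e2]])
  qed
  have d3: "DERIV (\<lambda>x. yy x A) s :> ys s 1 + (A-1)*Qs s A"
  proof (rule has_field_derivative_transform_within_open[OF d2, of "{0<..<1}"])
    show "open {0<..<(1::real)}" by simp
    show "s \<in> {0<..<1}" using assms by simp
    fix x :: real assume x: "x \<in> {0<..<1}"
    have "yy x A = yy x 1 + (A-1)*Qd x A" by (rule Qd_id) (use x assms in auto)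
    then show "yy x 1 + (A-1)*Qd x A = yy x A" by (rule sym)
  qed
  show ?thesis by (rule DERIV_unique[OF d1 d3])
qed

definition h0t :: "real \<Rightarrow> real \<Rightarrow> real" where "h0t a t = a^3 * g0 (sg a t)"
definition kt :: "real \<Rightarrow> real \<Rightarrow> real" where "kt a t = a^3 * kap (sg a t)"

lemma h0t_deriv: assumes "a > 0" "t > 0"
  shows "(h0t a has_real_derivative a^3 * (g0d (sg a t) * (- a * sg a t))) (at t)"
proof -
  note s = sgf[OF assms]
  from DERIV_chain2[OF g0_deriv[OF s] sg_deriv]
  have "DERIV (\<lambda>t. g0 (sg a t)) t :> g0d (sg a t) * (- a * sg a t)" .
  from DERIV_cmult[OF this, of "a^3"] show ?thesis unfolding h0t_def .
qed

lemma kt_deriv: assumes "a > 0" "t > 0"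
  shows "(kt a has_real_derivative a^3 * (kapd (sg a t) * (- a * sg a t))) (at t)"
proof -
  note s = sgf[OF assms]
  from DERIV_chain2[OF kap_deriv[OF s] sg_deriv]
  have "DERIV (\<lambda>t. kap (sg a t)) t :> kapd (sg a t) * (- a * sg a t)" .
  from DERIV_cmult[OF this, of "a^3"] show ?thesis unfolding kt_def .
qed

lemma h0t_ode: assumes "a > 0" "t > 0"
  shows "6 * (a^3 * (g0d (sg a t) * (- a * sg a t))) + 4 * Yt a 1 t * h0t a t + (Ydt a 1 t)^2 = 0"
proof -
  note s = sgf[OF assms]
  define x where "x = sg a t"
  have "6 * (a^3 * (g0d x * (- a * x))) + 4 * (a * yy x 1) * (a^3 * g0 x) + (- (a^2 * x * ys x 1))^2
      = a^4 * (-6*x*g0d x + 4*yy x 1 * g0 x + x^2*(ys x 1)^2)"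
    by algebra
  also have "\<dots> = 0" using g0_ode[OF s[folded x_def]] by simp
  finally show ?thesis unfolding Yt_def Ydt_def h0t_def x_def .
qed

lemma kt_ode: assumes "a > 0" "t > 0"
  shows "6 * (a^3 * (kapd (sg a t) * (- a * sg a t))) + 4 * Yt a 1 t * kt a t
     + 4 * h0t a t * (a * Qd (sg a t) 1) + 2 * Ydt a 1 t * (- (a^2 * sg a t * Qs (sg a t) 1)) = 0"
proof -
  note s = sgf[OF assms]
  define x where "x = sg a t"
  have "6 * (a^3 * (kapd x * (- a * x))) + 4 * (a * yy x 1) * (a^3 * kap x)
     + 4 * (a^3 * g0 x) * (a * Qd x 1) + 2 * (- (a^2 * x * ys x 1)) * (- (a^2 * x * Qs x 1))
      = a^4 * (-6*x*kapd x + 4*yy x 1 * kap x + 4*Qd x 1 * g0 x + 2*x^2*ys x 1 * Qs x 1)"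
    by algebra
  also have "\<dots> = 0" using kap_ode[OF s[folded x_def]] by simp
  finally show ?thesis unfolding Yt_def Ydt_def h0t_def kt_def x_def .
qed

lemma g0_cont: "isCont g0 0"
proof -
  have "isCont (\<lambda>s::real. 6* s^2*(1+s^2)/(1-s^2)^3) 0" by (intro continuous_intros) auto
  thus ?thesis unfolding g0_def[abs_def] .
qed

lemma kap_cont: "isCont kap 0"
proof -
  have "isCont (\<lambda>s::real. -(s^2*(385-189* s+154* s^2+54* s^3-11* s^4-9* s^5))/(35*(1-s)*(1+s)^4)) 0"
    by (intro continuous_intros) auto
  thus ?thesis unfolding kap_def[abs_def] .
qed

lemma h0t_lim: assumes "a > 0" shows "(h0t a \<longlongrightarrow> 0) at_top"
proof -
  have "((\<lambda>t. g0 (sg a t)) \<longlongrightarrow> g0 0) at_top" by (rule isCont_tendsto_compose[OF g0_cont sg_lim[OF assms]])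
  from tendsto_mult[OF tendsto_const this, of "a^3"] show ?thesis unfolding h0t_def[abs_def] g0_def by simp
qed

lemma kt_lim: assumes "a > 0" shows "(kt a \<longlongrightarrow> 0) at_top"
proof -
  have "((\<lambda>t. kap (sg a t)) \<longlongrightarrow> kap 0) at_top" by (rule isCont_tendsto_compose[OF kap_cont sg_lim[OF assms]])
  from tendsto_mult[OF tendsto_const this, of "a^3"] show ?thesis unfolding kt_def[abs_def] kap_def by simp
qed

lemma Hs_h0: assumes "a > 0" shows "Hs a 1 (h0t a)"
  unfolding Hs_def using h0t_deriv[OF assms] h0t_ode[OF assms] h0t_lim[OF assms] by blast

lemma exist_abstract:
  fixes a :: real and Y Yd psi :: "real \<Rightarrow> real"
  assumes a: "a > 0"
    and ppos: "\<And>t. t > 0 \<Longrightarrow> psi t > 0"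
    and pder: "\<And>t. t > 0 \<Longrightarrow> (psi has_real_derivative psi t * (2/3 * Y t)) (at t)"
    and pdec: "\<And>t u. 0 < t \<Longrightarrow> t \<le> u \<Longrightarrow> psi u \<le> psi t"
    and Ydc: "\<And>t. t > 0 \<Longrightarrow> isCont Yd t"
    and Kb: "\<And>c. c > 0 \<Longrightarrow> \<exists>K. \<forall>u\<ge>c. (Yd u)^2 \<le> K * (sg a u)^2"
  shows "\<exists>h. (\<forall>S>0. \<exists>d. (h has_real_derivative d) (at S) \<and> 6*d + 4*Y S*h S + (Yd S)^2 = 0)
             \<and> (h \<longlongrightarrow> 0) at_top"
proof -
  define q where "q t = psi t * (Yd t)^2" for t
  have qnn: "q t \<ge> 0" if "t > 0" for t
    unfolding q_def using ppos[OF that] by simp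
  have qcont: "isCont q t" if "t > 0" for t
    unfolding q_def using DERIV_isCont[OF pder[OF that]] Ydc[OF that] by (intro continuous_intros)
  have qc: "continuous_on {c..T} q" if "0 < c" for c T
    by (rule continuous_at_imp_continuous_on) (use qcont that in auto)
  have qi: "q integrable_on {c..T}" if "0 < c" for c T
    by (rule integrable_continuous_interval[OF qc[OF that]])
  define F where "F c T = integral {c..T} q" for c T
  have Fnn: "F t T \<ge> 0" if "0 < t" for t T
    unfolding F_def by (rule integral_nonneg[OF qi[OF that]]) (use that qnn in auto)
  have Fcomb: "F c t + F t T = F c T" if "0 < c" "c \<le> t" "t \<le> T" for c t T
    unfolding F_def by (rule Henstock_Kurzweil_Integration.integral_combine[OF that(2,3) qi[OF that(1)]])
  have bnd: "F t T \<le> psi t * K * (sg a t)^2 / (2*a)"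
    if c: "0 < c" "c \<le> t" "t \<le> T" and K: "\<forall>u\<ge>c. (Yd u)^2 \<le> K * (sg a u)^2" for c t T K
  proof -
    have t0: "t > 0" using c by simp
    have K0: "K \<ge> 0"
    proof (rule ccontr)
      assume "\<not> K \<ge> 0"
      hence "K * (sg a c)^2 < 0" using sg_pos[of a c] by (simp add: mult_neg_pos)
      moreover have "(Yd c)^2 \<le> K * (sg a c)^2" using K by simp
      ultimately show False by (smt (verit) zero_le_power2)
    qed
    define B where "B u = psi t * K * (sg a u)^2" for u
    have le: "q u \<le> B u" if u: "u \<in> {t..T}" for u
    proof -
      have "psi u \<le> psi t" using pdec[OF t0] u by auto
      moreover have "(Yd u)^2 \<le> K * (sg a u)^2" using K u c by auto
      ultimately show ?thesis unfolding q_def B_def using ppos[of u] u t0 K0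
        by (simp add: mult.assoc mult_mono)
    qed
    define G where "G u = psi t * K * (- ((sg a u)^2) / (2*a))" for u
    have Gd: "(G has_real_derivative B u) (at u)" for u
    proof -
      have "((\<lambda>u. psi t * K * (- ((sg a u)^2) / (2*a))) has_real_derivative
          psi t * K * (- (2 * sg a u * (- a * sg a u)) / (2*a))) (at u)"
        by (auto intro!: derivative_eq_intros sg_deriv simp: power2_eq_square)
      moreover have "psi t * K * (- (2 * sg a u * (- a * sg a u)) / (2*a)) = B u"
        unfolding B_def using a by (simp add: power2_eq_square)
      ultimately show ?thesis unfolding G_def by simp
    qed
    have hi: "(B has_integral (G T - G t)) {t..T}"
      by (rule fundamental_theorem_of_calculus[OF c(3)])
         (use Gd in \<open>auto simp: has_real_derivative_iff_has_vector_derivative[symmetric] intro: has_field_derivative_at_within\<close>)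
    have Bi: "B integrable_on {t..T}" using hi by blast
    have "F t T \<le> integral {t..T} B"
      unfolding F_def by (rule integral_le[OF qi[OF t0] Bi le])
    also have "\<dots> = G T - G t" using hi by (rule integral_unique)
    also have "\<dots> \<le> psi t * K * (sg a t)^2 / (2*a)"
    proof -
      have "psi t * K * (sg a T)^2 / (2*a) \<ge> 0" using ppos[OF t0] K0 a by simp
      thus ?thesis unfolding G_def by (simp add: field_simps)
    qed
    finally show ?thesis .
  qed
  have conv: "\<exists>L. (F c \<longlongrightarrow> L) at_top" if c: "0 < c" for c
  proof -
    obtain K where K: "\<forall>u\<ge>c. (Yd u)^2 \<le> K * (sg a u)^2" using Kb[OF c] by blast
    define M where "M = psi c * K * (sg a c)^2 / (2*a)"
    have FM: "F c T \<le> M" if "c \<le> T" for T unfolding M_def by (rule bnd[OF c _ that K]) simp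
    have Fmono: "F c T1 \<le> F c T2" if "c \<le> T1" "T1 \<le> T2" for T1 T2
      using Fcomb[OF c that] Fnn[of T1 T2] c that by simp
    have bdd: "bdd_above (F c ` {c..})" using FM by (auto simp: bdd_above_def)
    define L where "L = (SUP T\<in>{c..}. F c T)"
    have "(F c \<longlongrightarrow> L) at_top"
    proof (rule increasing_tendsto)
      show "\<forall>\<^sub>F n in at_top. F c n \<le> L"
        unfolding eventually_at_top_linorder L_def using bdd by (auto intro!: exI[of _ c] cSUP_upper)
      fix x assume "x < L"
      then obtain T0 where T0: "T0 \<in> {c..}" "x < F c T0"
        unfolding L_def using less_cSUP_iff[OF _ bdd] by auto
      show "\<forall>\<^sub>F n in at_top. x < F c n"
        unfolding eventually_at_top_linorder
        using T0 Fmono by (intro exI[of _ T0]) (auto intro: less_le_trans)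
    qed
    thus ?thesis by blast
  qed
  define J where "J t = Lim at_top (F t)" for t
  have Jlim: "(F t \<longlongrightarrow> J t) at_top" if "0 < t" for t
    using conv[OF that] unfolding J_def by (metis tendsto_Lim trivial_limit_at_top_linorder)
  have Jrel: "J t = J c - F c t" if "0 < c" "c \<le> t" for c t
  proof -
    have t0: "t > 0" using that by simp
    have "((\<lambda>T. F c T - F c t) \<longlongrightarrow> J c - F c t) at_top"
      by (intro tendsto_diff Jlim[OF that(1)] tendsto_const)
    moreover have "\<forall>\<^sub>F T in at_top. F c T - F c t = F t T"
      unfolding eventually_at_top_linorder using Fcomb[OF that] by (intro exI[of _ t]) (auto simp: algebra_simps)
    ultimately have "(F t \<longlongrightarrow> J c - F c t) at_top" by (rule Lim_transform_eventually)
    from tendsto_unique[OF _ Jlim[OF t0] this] show ?thesis by simp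
  qed
  define h where "h t = J t / (6 * psi t)" for t
  have deriv: "\<exists>d. (h has_real_derivative d) (at S) \<and> 6*d + 4*Y S*h S + (Yd S)^2 = 0" if S: "S > 0" for S
  proof -
    define c where "c = S/2"
    have c: "0 < c" "c < S" using S by (auto simp: c_def)
    have FD: "(F c has_real_derivative q S) (at S)"
    proof -
      have "(F c has_real_derivative q S) (at S within {c..S+1})"
        unfolding F_def[abs_def] by (rule integral_has_real_derivative[OF qc[OF c(1)]]) (use c in auto)
      thus ?thesis using at_within_Icc_at[of c S "S+1"] c by simp
    qed
    have ps: "psi S > 0" using ppos[OF S] .
    define D where "D = ((0 - q S) * (6 * psi S) - (J c - F c S) * (6 * (psi S * (2/3 * Y S)))) / ((6 * psi S) * (6 * psi S))"
    have "((\<lambda>x. (J c - F c x) / (6 * psi x)) has_real_derivative D) (at S)"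
      unfolding D_def
      by (rule DERIV_divide[OF DERIV_diff[OF DERIV_const FD] DERIV_cmult[OF pder[OF S]]]) (use ps in simp)
    then have hD: "(h has_real_derivative D) (at S)"
    proof (rule has_field_derivative_transform_within_open[where S="{c<..}"])
      show "open {c<..}" by simp
      show "S \<in> {c<..}" using c by simp
      fix x assume "x \<in> {c<..}"
      then show "(J c - F c x) / (6 * psi x) = h x" unfolding h_def using Jrel[of c x] c by simp
    qed
    have hS: "h S = (J c - F c S) / (6 * psi S)" unfolding h_def using Jrel[of c S] c by simp
    have "6*D + 4*Y S*h S + (Yd S)^2 = 0"
      unfolding D_def hS q_def using ps by (simp add: divide_simps)
    with hD show ?thesis by blast
  qed
  have lim: "(h \<longlongrightarrow> 0) at_top"
  proof -
    obtain K where K: "\<forall>u\<ge>1. (Yd u)^2 \<le> K * (sg a u)^2" using Kb[of 1] by auto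
    have hb: "0 \<le> h t \<and> h t \<le> K / (12*a) * (sg a t)^2" if t: "t \<ge> 1" for t
    proof -
      have t0: "t > 0" using t by simp
      have "0 \<le> J t"
        by (rule tendsto_lowerbound[OF Jlim[OF t0]]) (use Fnn t0 in auto)
      moreover have "J t \<le> psi t * K * (sg a t)^2 / (2*a)"
        by (rule tendsto_upperbound[OF Jlim[OF t0]])
           (use bnd[of 1 t _ K] K t in \<open>auto simp: eventually_at_top_linorder intro!: exI[of _ t]\<close>)
      moreover have "psi t > 0" using ppos[OF t0] .
      ultimately show ?thesis unfolding h_def using a by (simp add: divide_simps) (simp add: algebra_simps)
    qed
    have up: "((\<lambda>t. K / (12*a) * (sg a t)^2) \<longlongrightarrow> K / (12*a) * 0^2) at_top"
      by (intro tendsto_intros sg_lim a)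
    show ?thesis
      by (rule tendsto_sandwich[OF _ _ tendsto_const up[simplified]])
         (use hb in \<open>auto simp: eventually_at_top_linorder intro!: exI[of _ 1]\<close>)
  qed
  show ?thesis using deriv lim by blast
qed

lemma ys_cont: assumes "0 \<le> s" "s < 1" "A \<ge> 1" shows "isCont (\<lambda>s. ys s A) s"
proof -
  have W: "Wfun s A > 0" using W_pos assms by auto
  have c1: "isCont (\<lambda>s. Wfun s A) s" by (rule DERIV_isCont[OF W_deriv])
  have c2: "isCont (\<lambda>s. Wsd s A) s" by (rule DERIV_isCont[OF Ws_deriv])
  have c3: "isCont (\<lambda>s. Wssd s A) s" unfolding Wssd_def by (intro continuous_intros)
  show ?thesis unfolding ys_def using W assms
    by (intro continuous_intros c1 c2 c3) auto
qed

lemma Ydt_cont: assumes "a > 0" "t > 0" "A \<ge> 1" shows "isCont (Ydt a A) t"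
proof -
  note s = sgf[OF assms(1,2)]
  have c1: "isCont (sg a) t" by (rule DERIV_isCont[OF sg_deriv])
  have "isCont (\<lambda>t. ys (sg a t) A) t"
    by (rule isCont_o2[OF c1 ys_cont[OF s assms(3)]])
  then show ?thesis unfolding Ydt_def[abs_def] using c1 by (intro continuous_intros)
qed

lemma Kb_Ydt: assumes a: "a > 0" and c: "c > 0" and A: "A \<ge> 1"
  shows "\<exists>K. \<forall>u\<ge>c. (Ydt a A u)^2 \<le> K * (sg a u)^2"
proof -
  have sc: "sg a c < 1" using sg_lt1[OF a c] .
  have "continuous_on {0..sg a c} (\<lambda>s. \<bar>ys s A\<bar>)"
    by (intro continuous_at_imp_continuous_on ballI continuous_intros ys_cont) (use sc A in auto)
  from continuous_attains_sup[OF compact_Icc _ this] obtain s0 where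
    s0: "\<And>y. y \<in> {0..sg a c} \<Longrightarrow> \<bar>ys y A\<bar> \<le> \<bar>ys s0 A\<bar>" using sg_pos[of a c] by fastforce
  define B where "B = \<bar>ys s0 A\<bar>"
  have B0: "B \<ge> 0" unfolding B_def by simp
  show ?thesis
  proof (intro exI[of _ "a^4 * B^2"] allI impI)
    fix u assume u: "u \<ge> c"
    have su: "sg a u \<in> {0..sg a c}" using sg_mono[OF a u] sg_pos[of a u] by auto
    have "\<bar>ys (sg a u) A\<bar> \<le> B" using s0[OF su] unfolding B_def .
    hence "(ys (sg a u) A)^2 \<le> B^2" by (metis abs_ge_zero power2_abs power_mono)
    hence "a^4 * (sg a u)^2 * (ys (sg a u) A)^2 \<le> a^4 * (sg a u)^2 * B^2"
      by (intro mult_left_mono) auto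
    moreover have "(Ydt a A u)^2 = a^4 * (sg a u)^2 * (ys (sg a u) A)^2"
      unfolding Ydt_def by algebra
    ultimately show "(Ydt a A u)^2 \<le> a^4 * B^2 * (sg a u)^2" by (simp add: algebra_simps)
  qed
qed

definition Phi :: "real \<Rightarrow> real \<Rightarrow> real \<Rightarrow> real" where
  "Phi a A t = -3*a*A*t - 9*ln (1 - sg a t) + 3*ln (Wfun (sg a t) A)"

lemma Phi_deriv: assumes a: "a > 0" and t: "t > 0" and A: "A \<ge> 1"
  shows "(Phi a A has_real_derivative Yt a A t) (at t)"
proof -
  note s = sgf[OF a t]
  have W: "Wfun (sg a t) A > 0" using W_pos s A by auto
  have p1: "1 - sg a t > 0" using s by simp
  have dW: "DERIV (\<lambda>t. Wfun (sg a t) A) t :> Wsd (sg a t) A * (- a * sg a t)"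
    by (rule DERIV_chain2[OF W_deriv sg_deriv])
  have d_lnW: "DERIV (\<lambda>t. ln (Wfun (sg a t) A)) t :> 1 / Wfun (sg a t) A * (Wsd (sg a t) A * (- a * sg a t))"
    by (rule DERIV_chain2[OF DERIV_ln_divide[OF W] dW])
  have d_ln1: "DERIV (\<lambda>t. ln (1 - sg a t)) t :> 1 / (1 - sg a t) * (0 - (- a * sg a t))"
    by (rule DERIV_chain2[OF DERIV_ln_divide[OF p1] DERIV_diff[OF DERIV_const sg_deriv]])
  have d_lin: "DERIV (\<lambda>t. -3*a*A*t) t :> -3*a*A * 1"
    by (rule DERIV_cmult[OF DERIV_ident])
  have "DERIV (Phi a A) t :> -3*a*A * 1 - 9 * (1 / (1 - sg a t) * (0 - (- a * sg a t)))
      + 3 * (1 / Wfun (sg a t) A * (Wsd (sg a t) A * (- a * sg a t)))"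
    unfolding Phi_def[abs_def]
    by (rule DERIV_add[OF DERIV_diff[OF d_lin DERIV_cmult[OF d_ln1]] DERIV_cmult[OF d_lnW]])
  moreover have "-3*a*A * 1 - 9 * (1 / (1 - sg a t) * (0 - (- a * sg a t)))
      + 3 * (1 / Wfun (sg a t) A * (Wsd (sg a t) A * (- a * sg a t))) = Yt a A t"
    unfolding Yt_def yy_def using W p1 by (simp add: divide_simps) algebra
  ultimately show ?thesis by simp
qed

lemma Hs_exists: assumes a: "a > 0" and A: "A \<ge> 1" shows "\<exists>h. Hs a A h"
proof -
  define psi where "psi t = exp (2/3 * Phi a A t)" for t
  have "\<exists>h. (\<forall>S>0. \<exists>d. (h has_real_derivative d) (at S) \<and> 6*d + 4*Yt a A S*h S + (Ydt a A S)^2 = 0)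
             \<and> (h \<longlongrightarrow> 0) at_top"
  proof (rule exist_abstract[OF a])
    show "psi t > 0" for t unfolding psi_def by simp
    show "(psi has_real_derivative psi t * (2/3 * Yt a A t)) (at t)" if "t > 0" for t
      unfolding psi_def[abs_def]
      by (rule DERIV_chain2[OF DERIV_exp DERIV_cmult[OF Phi_deriv[OF a that A]]])
    show "psi u \<le> psi t" if "0 < t" "t \<le> u" for t u
    proof -
      have "Phi a A u \<le> Phi a A t"
      proof (rule DERIV_nonpos_imp_nonincreasing[OF that(2)])
        fix x assume x: "t \<le> x" "x \<le> u"
        hence x0: "x > 0" using that by simp
        show "\<exists>y. DERIV (Phi a A) x :> y \<and> y \<le> 0"
          using Phi_deriv[OF a x0 A] Yt_le[OF a x0 A] a by (intro exI[of _ "Yt a A x"]) auto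
      qed
      thus ?thesis unfolding psi_def by simp
    qed
    show "isCont (Ydt a A) t" if "t > 0" for t by (rule Ydt_cont[OF a that A])
    show "\<exists>K. \<forall>u\<ge>c. (Ydt a A u)^2 \<le> K * (sg a u)^2" if "c > 0" for c by (rule Kb_Ydt[OF a that A])
  qed
  thus ?thesis unfolding Hs_def by blast
qed

lemma err_alg:
  fixes A dl hl YA YdA d0 Y1 h0 Yd1 dk k a Q1 x Qs1 QA ysA ys1 QsA g kp :: real
  assumes A: "A \<noteq> 1"
   and e1: "6*dl + 4*YA*hl + YdA^2 = 0"
   and e2: "6*d0 + 4*Y1*h0 + Yd1^2 = 0"
   and e3: "6*dk + 4*Y1*k + 4*h0*(a*Q1) + 2*Yd1*(-(a^2*x*Qs1)) = 0"
   and e4: "YA = Y1 + a*(A-1)*QA"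
   and e5: "YdA = -(a^2*x*ysA)" and e6: "Yd1 = -(a^2*x*ys1)" and e7: "ysA = ys1 + (A-1)*QsA"
   and e8: "h0 = a^3*g" and e9: "k = a^3*kp"
  shows "6*((dl-d0)/(A-1) - dk) + 4*YA*((hl-h0)/(A-1) - k)
      = a^4*(-(x^2*(ysA + ys1)*QsA) + 2*x^2*ys1*Qs1 - 4*g*(QA - Q1) - 4*(A-1)*QA*kp)"
proof -
  have A1: "A - 1 \<noteq> 0" using A by simp
  have dl: "dl = -(4*YA*hl + YdA^2)/6" using e1 by simp
  have d0: "d0 = -(4*Y1*h0 + Yd1^2)/6" using e2 by simp
  have dk: "dk = -(4*Y1*k + 4*h0*(a*Q1) + 2*Yd1*(-(a^2*x*Qs1)))/6" using e3 by simp
  show ?thesis unfolding dl d0 dk e4 e5 e6 e7 e8 e9 using A1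
    by (simp add: divide_simps) algebra
qed

definition Ef :: "real \<Rightarrow> real \<Rightarrow> real" where
  "Ef s A = -(s^2*(ys s A + ys s 1)*Qs s A) + 2* s^2*ys s 1*Qs s 1 - 4*g0 s*(Qd s A - Qd s 1) - 4*(A-1)*Qd s A*kap s"

lemma err_bound:
  assumes a: "a > 0" and S: "S > 0" and A: "1 < A" and hA: "Hs a A hA"
    and eb: "\<And>s. s \<in> {0..sg a S} \<Longrightarrow> \<bar>Ef s A\<bar> \<le> eps"
  shows "\<bar>(hA S - h0t a S)/(A-1) - kt a S\<bar> \<le> a^4*eps/(4*(3*a))"
proof -
  have A1: "A \<ge> 1" using A by simp
  have "\<forall>S. \<exists>d. S > 0 \<longrightarrow> (hA has_real_derivative d) (at S) \<and> 6 * d + 4 * Yt a A S * hA S + (Ydt a A S)^2 = 0"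
    using hA unfolding Hs_def by blast
  then obtain dA where dA: "\<And>S. S > 0 \<Longrightarrow> (hA has_real_derivative dA S) (at S) \<and> 6 * dA S + 4 * Yt a A S * hA S + (Ydt a A S)^2 = 0"
    by metis
  define d0 where "d0 t = a^3 * (g0d (sg a t) * (- a * sg a t))" for t
  define dk where "dk t = a^3 * (kapd (sg a t) * (- a * sg a t))" for t
  have "\<bar>(\<lambda>t. (hA t - h0t a t)/(A-1) - kt a t) S\<bar> \<le> a^4*eps/(4*(3*a))"
  proof (rule maxp[where r="\<lambda>t. (hA t - h0t a t)/(A-1) - kt a t" and r'="\<lambda>t. (dA t - d0 t)/(A-1) - dk t"
        and Y="Yt a A" and f="\<lambda>t. -(a^4 * Ef (sg a t) A)" and c="3*a" and M="a^4*eps"])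
    show "3*a > 0" using a by simp
    show "((\<lambda>t. (hA t - h0t a t)/(A-1) - kt a t) has_real_derivative (dA t - d0 t)/(A-1) - dk t) (at t)"
      if "S \<le> t" for t
    proof -
      have t: "t > 0" using that S by simp
      show ?thesis unfolding d0_def dk_def
        by (intro DERIV_diff DERIV_cdivide h0t_deriv[OF a t] kt_deriv[OF a t]) (use dA[OF t] in simp)
    qed
    show "6 * ((dA t - d0 t)/(A-1) - dk t) + 4 * Yt a A t * ((hA t - h0t a t)/(A-1) - kt a t) = - (-(a^4 * Ef (sg a t) A))"
      if "S \<le> t" for t
    proof -
      have t: "t > 0" using that S by simp
      note s = sgf[OF a t]
      have s0: "0 < sg a t" using sg_pos .
      have "6 * ((dA t - d0 t)/(A-1) - dk t) + 4 * Yt a A t * ((hA t - h0t a t)/(A-1) - kt a t)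
        = a^4*(-((sg a t)^2*(ys (sg a t) A + ys (sg a t) 1)*Qs (sg a t) A) + 2*(sg a t)^2*ys (sg a t) 1*Qs (sg a t) 1
           - 4*g0 (sg a t)*(Qd (sg a t) A - Qd (sg a t) 1) - 4*(A-1)*Qd (sg a t) A*kap (sg a t))"
      proof (rule err_alg)
        show "A \<noteq> 1" using A by simp
        show "6 * dA t + 4 * Yt a A t * hA t + (Ydt a A t)^2 = 0" using dA[OF t] by simp
        show "6 * d0 t + 4 * Yt a 1 t * h0t a t + (Ydt a 1 t)^2 = 0"
          unfolding d0_def by (rule h0t_ode[OF a t])
        show "6 * dk t + 4 * Yt a 1 t * kt a t + 4 * h0t a t * (a * Qd (sg a t) 1)
            + 2 * Ydt a 1 t * (- (a^2 * sg a t * Qs (sg a t) 1)) = 0"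
          unfolding dk_def by (rule kt_ode[OF a t])
        show "Yt a A t = Yt a 1 t + a * (A-1) * Qd (sg a t) A"
          unfolding Yt_def by (subst Qd_id[OF s A1]) (simp add: algebra_simps)
        show "Ydt a A t = -(a^2 * sg a t * ys (sg a t) A)" unfolding Ydt_def ..
        show "Ydt a 1 t = -(a^2 * sg a t * ys (sg a t) 1)" unfolding Ydt_def ..
        show "ys (sg a t) A = ys (sg a t) 1 + (A-1) * Qs (sg a t) A" by (rule ys_id[OF s0 s(2) A1])
        show "h0t a t = a^3 * g0 (sg a t)" unfolding h0t_def ..
        show "kt a t = a^3 * kap (sg a t)" unfolding kt_def ..
      qed
      then show ?thesis unfolding Ef_def by simp
    qed
    show "Yt a A t \<le> - (3*a)" if "S \<le> t" for t using Yt_le[OF a _ A1, of t] that S by simp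
    show "\<bar>-(a^4 * Ef (sg a t) A)\<bar> \<le> a^4*eps" if "S \<le> t" for t
    proof -
      have "sg a t \<in> {0..sg a S}" using sg_mono[OF a that] sg_pos[of a t] by auto
      then have "\<bar>Ef (sg a t) A\<bar> \<le> eps" by (rule eb)
      then have "a^4 * \<bar>Ef (sg a t) A\<bar> \<le> a^4 * eps" by (intro mult_left_mono) auto
      then show ?thesis by (simp add: abs_mult)
    qed
    show "((\<lambda>t. (hA t - h0t a t)/(A-1) - kt a t) \<longlongrightarrow> 0) at_top"
    proof -
      have "((\<lambda>t. (hA t - h0t a t)/(A-1) - kt a t) \<longlongrightarrow> (0 - 0)/(A-1) - 0) at_top"
        using hA h0t_lim[OF a] kt_lim[OF a] A unfolding Hs_def by (intro tendsto_intros) auto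
      then show ?thesis by simp
    qed
  qed
  then show ?thesis by simp
qed

lemma cW[continuous_intros]: "continuous_on S f \<Longrightarrow> continuous_on S g \<Longrightarrow> continuous_on S (\<lambda>x. Wfun (f x) (g x))"
  unfolding Wfun_def by (intro continuous_intros)
lemma cWs[continuous_intros]: "continuous_on S f \<Longrightarrow> continuous_on S g \<Longrightarrow> continuous_on S (\<lambda>x. Wsd (f x) (g x))"
  unfolding Wsd_def by (intro continuous_intros)
lemma cWss[continuous_intros]: "continuous_on S f \<Longrightarrow> continuous_on S g \<Longrightarrow> continuous_on S (\<lambda>x. Wssd (f x) (g x))"
  unfolding Wssd_def by (intro continuous_intros)
lemma cNN[continuous_intros]: "continuous_on S f \<Longrightarrow> continuous_on S g \<Longrightarrow> continuous_on S (\<lambda>x. NN (f x) (g x))"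
  unfolding NN_def by (intro continuous_intros)
lemma cNNs[continuous_intros]: "continuous_on S f \<Longrightarrow> continuous_on S g \<Longrightarrow> continuous_on S (\<lambda>x. NNs (f x) (g x))"
  unfolding NNs_def by (intro continuous_intros)

lemma nzK: assumes "p \<in> {0..s1} \<times> {1..2::real}" "s1 < 1"
  shows "Wfun (fst p) (snd p) > 0 \<and> Wfun (fst p) 1 > 0 \<and> 1 - fst p > 0 \<and> 1 + fst p > 0 \<and> 1 - (fst p)^2 > 0"
proof -
  have s: "0 \<le> fst p" "fst p < 1" "1 \<le> snd p" using assms by auto
  show ?thesis using W_pos[of "fst p" "snd p"] W_pos[of "fst p" 1] s_facts[OF s(1,2)] s by auto
qed

lemma Ef_cont: assumes "s1 < 1"
  shows "continuous_on ({0..s1} \<times> {1..2}) (\<lambda>p. Ef (fst p) (snd p))"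
  unfolding Ef_def ys_def Qs_def Qd_def g0_def kap_def
  by (intro continuous_intros ballI; drule nzK[OF _ assms]; elim conjE; simp)

lemma Ef1: "Ef s 1 = 0" unfolding Ef_def by simp

lemma Ef_unif: assumes "s1 < 1" "e > 0"
  shows "\<exists>d>0. \<forall>s\<in>{0..s1}. \<forall>A. 1 \<le> A \<longrightarrow> A \<le> 2 \<longrightarrow> \<bar>A - 1\<bar> < d \<longrightarrow> \<bar>Ef s A\<bar> < e"
proof -
  have "uniformly_continuous_on ({0..s1} \<times> {1..2}) (\<lambda>p. Ef (fst p) (snd p))"
    by (rule compact_uniformly_continuous[OF Ef_cont[OF assms(1)] compact_Times[OF compact_Icc compact_Icc]])
  then obtain d where d: "d > 0" and
    dd: "\<And>x x'. x \<in> {0..s1} \<times> {1..2} \<Longrightarrow> x' \<in> {0..s1} \<times> {1..2} \<Longrightarrow> dist x' x < d \<Longrightarrow>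
          dist (Ef (fst x') (snd x')) (Ef (fst x) (snd x)) < e"
    unfolding uniformly_continuous_on_def using assms(2) by metis
  show ?thesis
  proof (intro exI[of _ d] conjI ballI allI impI)
    show "d > 0" by (rule d)
    fix s A assume s: "s \<in> {0..s1}" and A: "1 \<le> A" "A \<le> 2" "\<bar>A - 1\<bar> < d"
    have "dist (s, A) (s, 1) = \<bar>A - 1\<bar>" by (simp add: dist_Pair_Pair dist_real_def)
    hence "dist (Ef s A) (Ef s 1) < e" using dd[of "(s,1)" "(s,A)"] s A by auto
    thus "\<bar>Ef s A\<bar> < e" by (simp add: Ef1 dist_real_def)
  qed
qed

lemma Acoef_deriv: assumes a: "a > 0" shows "(Acoef a has_real_derivative 3/(2*a^2)) (at 0)"
proof -
  have g: "DERIV (\<lambda>l. 1 + (3/a^2)*l) 0 :> 0 + 3/a^2 * 1"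
    by (rule DERIV_add[OF DERIV_const DERIV_cmult[OF DERIV_ident]])
  have s: "DERIV sqrt (1 + (3/a^2)*0) :> inverse (sqrt (1 + (3/a^2)*0)) / 2"
    by (rule DERIV_real_sqrt) simp
  have "DERIV (\<lambda>l. sqrt (1 + (3/a^2)*l)) 0 :> inverse (sqrt (1 + (3/a^2)*0)) / 2 * (0 + 3/a^2 * 1)"
    by (rule DERIV_chain2[OF s g])
  moreover have "Acoef a = (\<lambda>l. sqrt (1 + (3/a^2)*l))" unfolding Acoef_def[abs_def] by simp
  ultimately show ?thesis by simp
qed

lemma Acoef_gt: assumes a: "a > 0" and l: "lam > 0" shows "Acoef a lam > 1"
proof -
  have "sqrt 1 < sqrt (1 + 3*lam/a^2)" using a l by (intro real_sqrt_less_mono) simp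
  thus ?thesis unfolding Acoef_def by simp
qed

theorem mainTheorem5:
  fixes a S :: real
  assumes "a > 0" and "S > 0"
  defines "\<sigma> \<equiv> exp (- a * S)"
  shows "Ffun S a 0 = 2 * a^3 * \<sigma>^2 * (1 + \<sigma>^2) / (1 - \<sigma>^2)^3
    \<and> ((\<lambda>lam. Ffun S a lam) has_real_derivative
           (- a * \<sigma>^2 * (385 - 189 * \<sigma> + 154 * \<sigma>^2 + 54 * \<sigma>^3 - 11 * \<sigma>^4 - 9 * \<sigma>^5)
             / (70 * (1 - \<sigma>) * (1 + \<sigma>)^4))) (at 0 within {0..})"
proof -
  have a: "a > 0" and S: "S > 0" by fact+
  have sgS: "sg a S = \<sigma>" unfolding sg_def \<sigma>_def ..
  have A0: "Acoef a 0 = 1" unfolding Acoef_def by simp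
  have H0: "Hfun S a 0 = h0t a S"
    by (rule Hfun_eq[OF a _ S]) (use Hs_h0[OF a] A0 in simp_all)
  have F0: "Ffun S a 0 = h0t a S / 3" unfolding Ffun_def H0 ..
  have part1: "Ffun S a 0 = 2 * a^3 * \<sigma>^2 * (1 + \<sigma>^2) / (1 - \<sigma>^2)^3"
    unfolding F0 h0t_def g0_def sgS by simp
  define hl where "hl lam = (SOME h. Hs a (Acoef a lam) h)" for lam
  have hl: "Hs a (Acoef a lam) (hl lam)" if "lam \<ge> 0" for lam
    unfolding hl_def by (rule someI_ex[OF Hs_exists[OF a Acoef_ge[OF a that]]])
  have Hl: "Hfun S a lam = hl lam S" if "lam \<ge> 0" for lam
    by (rule Hfun_eq[OF a that S hl[OF that]])
  define e where "e lam = (hl lam S - h0t a S)/(Acoef a lam - 1) - kt a S" for lam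
  have key: "(Ffun S a lam - Ffun S a 0)/(lam - 0) = ((Acoef a lam - Acoef a 0)/(lam - 0)) * ((kt a S + e lam)/3)"
    if l: "lam > 0" for lam
  proof -
    have A1: "Acoef a lam - 1 \<noteq> 0" using Acoef_gt[OF a l] by simp
    have "Ffun S a lam - Ffun S a 0 = (hl lam S - h0t a S)/3"
    proof -
      have "Hfun S a lam = hl lam S" using Hl[of lam] l by simp
      then show ?thesis unfolding Ffun_def H0 by (simp add: diff_divide_distrib)
    qed
    also have "hl lam S - h0t a S = (Acoef a lam - 1) * (kt a S + e lam)"
      unfolding e_def using A1 by (simp add: field_simps)
    finally have "Ffun S a lam - Ffun S a 0 = (Acoef a lam - 1) * (kt a S + e lam) / 3" by simp
    then show ?thesis unfolding A0 diff_0_right by (simp only:) (simp add: field_simps)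
  qed
  have Ad: "((\<lambda>y. (Acoef a y - Acoef a 0)/(y - 0)) \<longlongrightarrow> 3/(2*a^2)) (at 0 within {0..})"
    using has_field_derivative_at_within[OF Acoef_deriv[OF a], of "{0..}"]
    unfolding has_field_derivative_iff .
  have Acont: "(Acoef a \<longlongrightarrow> 1) (at 0 within {0..})"
  proof -
    have "isCont (Acoef a) 0" by (rule DERIV_isCont[OF Acoef_deriv[OF a]])
    hence "(Acoef a \<longlongrightarrow> 1) (at 0)" unfolding isCont_def A0 .
    thus ?thesis by (rule tendsto_within_subset) simp
  qed
  have sig1: "\<sigma> < 1" using sg_lt1[OF a S] sgS by simp
  have el: "(e \<longlongrightarrow> 0) (at 0 within {0..})"
  proof (rule tendstoI)
    fix eps :: real assume eps: "eps > 0"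
    define e' where "e' = 6*eps/a^3"
    have e': "e' > 0" unfolding e'_def using eps a by simp
    obtain d where d: "d > 0" and
      dd: "\<And>s A. s \<in> {0..\<sigma>} \<Longrightarrow> 1 \<le> A \<Longrightarrow> A \<le> 2 \<Longrightarrow> \<bar>A - 1\<bar> < d \<Longrightarrow> \<bar>Ef s A\<bar> < e'"
      using Ef_unif[OF sig1 e'] by blast
    have ev1: "\<forall>\<^sub>F y in at 0 within {0..}. dist (Acoef a y) 1 < min d 1"
      using tendstoD[OF Acont, of "min d 1"] d by simp
    have ev2: "\<forall>\<^sub>F y in at 0 within {0..}. y > (0::real)"
      unfolding eventually_at_filter by (auto intro: always_eventually)
    show "\<forall>\<^sub>F y in at 0 within {0..}. dist (e y) 0 < eps"
      using ev1 ev2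
    proof (eventually_elim)
      case (elim y)
      have A1: "Acoef a y > 1" by (rule Acoef_gt[OF a elim(2)])
      have Ab: "\<bar>Acoef a y - 1\<bar> < d" "Acoef a y \<le> 2" using elim(1) by (auto simp: dist_real_def)
      have "\<bar>e y\<bar> \<le> a^4*e'/(4*(3*a))"
        unfolding e_def
      proof (rule err_bound[OF a S A1 hl])
        show "y \<ge> 0" using elim(2) by simp
        fix s assume "s \<in> {0..sg a S}"
        then show "\<bar>Ef s (Acoef a y)\<bar> \<le> e'" using dd[of s "Acoef a y"] A1 Ab sgS by auto
      qed
      also have "a^4*e'/(4*(3*a)) = eps/2" unfolding e'_def using a by (simp add: field_simps power3_eq_cube eval_nat_numeral)
      finally show ?case using eps by (simp add: dist_real_def)
    qed
  qed
  have lim: "((\<lambda>y. ((Acoef a y - Acoef a 0)/(y - 0)) * ((kt a S + e y)/3)) \<longlongrightarrow> 3/(2*a^2) * ((kt a S + 0)/3)) (at 0 within {0..})"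
    by (intro tendsto_mult Ad tendsto_divide tendsto_add tendsto_const el) simp
  have ev: "\<forall>\<^sub>F y in at 0 within {0..}. ((Acoef a y - Acoef a 0)/(y - 0)) * ((kt a S + e y)/3) = (Ffun S a y - Ffun S a 0)/(y - 0)"
    unfolding eventually_at_filter
  proof (intro always_eventually allI impI)
    fix y :: real assume y: "y \<noteq> 0" "y \<in> {0..}"
    show "((Acoef a y - Acoef a 0)/(y - 0)) * ((kt a S + e y)/3) = (Ffun S a y - Ffun S a 0)/(y - 0)"
      by (rule key[symmetric]) (use y in auto)
  qed
  have "((\<lambda>y. (Ffun S a y - Ffun S a 0)/(y - 0)) \<longlongrightarrow> 3/(2*a^2) * ((kt a S + 0)/3)) (at 0 within {0..})"
    by (rule Lim_transform_eventually[OF lim ev])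
  hence D: "((\<lambda>lam. Ffun S a lam) has_real_derivative 3/(2*a^2) * ((kt a S + 0)/3)) (at 0 within {0..})"
    unfolding has_field_derivative_iff .
  have "3/(2*a^2) * ((kt a S + 0)/3) = (- a * \<sigma>^2 * (385 - 189 * \<sigma> + 154 * \<sigma>^2 + 54 * \<sigma>^3 - 11 * \<sigma>^4 - 9 * \<sigma>^5)
             / (70 * (1 - \<sigma>) * (1 + \<sigma>)^4))"
  proof -
    have p: "1 - \<sigma> \<noteq> 0" "1 + \<sigma> \<noteq> 0" using sig1 sgS sg_pos[of a S] by auto
    show ?thesis unfolding kt_def kap_def sgS using a p by (simp add: divide_simps) algebra
  qed
  with D part1 show ?thesis by simp
qed

end
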